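(* Let $n\geq 2$. Then $C(r_{1/n})=P_n\rtimes\mathcal{E}^n_\Delta$; that is, $P_n$ is a normal subgroup of $C(r_{1/n})$, $P_n\cap\mathcal{E}^n_\Delta$ is trivial, and $C(r_{1/n})=P_n\cdot\mathcal{E}^n_\Delta$.
   Context: Identify $\mathbb{T}^1=\mathbb{R}/\mathbb{Z}$ with $[0,1)$. An interval exchange transformation is a bijection of $\mathbb{T}^1$ that is a translation on each piece of some partition of $[0,1)$ into finitely many half-open intervals $[a,b)$; $\mathcal{E}$ is the group of these. $C(f)=\{g\in\mathcal{E}:fg=gf\}$. $r_{1/n}(x)=x+1/n$. Let $I_i=[\frac{i-1}{n},\frac{i}{n})$, $1\le i\le n$. $\mathcal{E}^n_\Delta=\{g\in C(r_{1/n}): g(I_i)=I_i \text{ for } 1\le i\le n\}$. $P_n=\{g\in C(r_{1/n}):$ for every $x\in\mathbb{T}^1$ there is $k\in\mathbb{Z}$ with $g(x)=x+k/n \pmod 1\}$. *)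

theory Defs
  imports Complex_Main "HOL-Algebra.Coset"
begin

text \<open>Points of the circle T^1 = R/Z are identified with [0,1).  A map of the circle is
  represented by a function real => real which acts on [0,1) and is the identity outside
  [0,1) (so that equality and composition of maps are the HOL ones).\<close>

definition IET :: "(real \<Rightarrow> real) \<Rightarrow> bool" where
  "IET f \<longleftrightarrow>
     bij_betw f {0..<1} {0..<1} \<and>
     (\<forall>x. x \<notin> {0..<1} \<longrightarrow> f x = x) \<and>
     (\<exists>(k::nat) (a::nat \<Rightarrow> real) (c::nat \<Rightarrow> real).
        a 0 = 0 \<and> a k = 1 \<and> (\<forall>i<k. a i < a (Suc i)) \<and>
        (\<forall>i<k. \<forall>x. a i \<le> x \<and> x < a (Suc i) \<longrightarrow> f x = frac (x + c i)))"

definition IET_group :: "(real \<Rightarrow> real) monoid" where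
  "IET_group = \<lparr>carrier = {f. IET f}, mult = (\<circ>), one = id\<rparr>"

definition centralizer :: "(real \<Rightarrow> real) \<Rightarrow> (real \<Rightarrow> real) set" where
  "centralizer f = {g. IET g \<and> f \<circ> g = g \<circ> f}"

definition centralizer_group :: "(real \<Rightarrow> real) \<Rightarrow> (real \<Rightarrow> real) monoid" where
  "centralizer_group f = \<lparr>carrier = centralizer f, mult = (\<circ>), one = id\<rparr>"

definition rot :: "nat \<Rightarrow> real \<Rightarrow> real" where
  "rot n x = (if x \<in> {0..<1} then frac (x + 1 / real n) else x)"

definition Iint :: "nat \<Rightarrow> nat \<Rightarrow> real set" where
  "Iint n i = {(real i - 1) / real n ..< real i / real n}"

definition E_Delta :: "nat \<Rightarrow> (real \<Rightarrow> real) set" where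
  "E_Delta n = {g \<in> centralizer (rot n). \<forall>i\<in>{1..n}. g ` Iint n i = Iint n i}"

definition P_set :: "nat \<Rightarrow> (real \<Rightarrow> real) set" where
  "P_set n = {g \<in> centralizer (rot n).
      \<forall>x\<in>{0..<1}. \<exists>k::int. g x = frac (x + real_of_int k / real n)}"

end

theory Submission
  imports Defs
begin


definition PT :: "(real \<Rightarrow> real) \<Rightarrow> bool" where
  "PT g \<longleftrightarrow> (\<exists>F. finite F \<and> (\<forall>x y. 0 \<le> x \<longrightarrow> x \<le> y \<longrightarrow> y < 1 \<longrightarrow>
      (\<forall>b\<in>F. \<not> (x < b \<and> b \<le> y)) \<longrightarrow> g y - y = g x - x))"

lemma PTI:
  assumes "finite F"
    and "\<And>x y. 0 \<le> x \<Longrightarrow> x \<le> y \<Longrightarrow> y < 1 \<Longrightarrow> (\<And>b. b\<in>F \<Longrightarrow> \<not> (x < b \<and> b \<le> y)) \<Longrightarrow> g y - y = g x - x"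
  shows "PT g"
  unfolding PT_def
proof (intro exI[of _ F] conjI allI impI)
  show "finite F" by fact
  fix x y :: real
  assume h: "0 \<le> x" "x \<le> y" "y < 1" "\<forall>b\<in>F. \<not> (x < b \<and> b \<le> y)"
  show "g y - y = g x - x" by (rule assms(2)) (use h in auto)
qed

lemma PT_use:
  assumes F2: "\<forall>x y. 0 \<le> x \<longrightarrow> x \<le> y \<longrightarrow> y < 1 \<longrightarrow>
      (\<forall>b\<in>F. \<not> (x < b \<and> b \<le> y)) \<longrightarrow> g y - y = g x - x"
    and "0 \<le> x" "x \<le> y" "y < 1" and nb: "\<And>b. b\<in>F \<Longrightarrow> \<not> (x < b \<and> b \<le> y)"
  shows "g y - y = g x - x"
proof -
  have h: "\<forall>b\<in>F. \<not> (x < b \<and> b \<le> y)" using nb by (intro ballI)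
  have "0 \<le> x \<longrightarrow> x \<le> y \<longrightarrow> y < 1 \<longrightarrow>
      (\<forall>b\<in>F. \<not> (x < b \<and> b \<le> y)) \<longrightarrow> g y - y = g x - x"
    using F2 by (elim allE)
  then show ?thesis using h assms(2-4) by (elim impE)
qed

lemma find_piece:
  fixes a :: "nat \<Rightarrow> real"
  assumes "\<forall>i<k. a i < a (Suc i)" "a 0 \<le> x" "x < a k"
  shows "\<exists>i<k. a i \<le> x \<and> x < a (Suc i)"
  using assms
proof (induction k)
  case 0 then have False by linarith
  then show ?case by blast
next
  case (Suc k)
  have m: "\<forall>i<k. a i < a (Suc i)" using Suc.prems(1) by simp
  show ?case
  proof (cases "x < a k")
    case True
    then have "\<exists>i<k. a i \<le> x \<and> x < a (Suc i)" using Suc.IH m Suc.prems(2) by blast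
    then obtain i where "i<k" "a i \<le> x" "x < a (Suc i)" by blast
    then show ?thesis using less_SucI by blast
  next
    case False
    then have "a k \<le> x" "x < a (Suc k)" using Suc.prems(3) by auto
    then show ?thesis by blast
  qed
qed

lemma IET_PT:
  assumes "IET f" shows "PT f"
proof -
  from assms obtain k a c where f01: "bij_betw f {0..<1} {0..<1}"
    and a0: "a 0 = (0::real)" and ak: "a k = 1" and amono: "\<forall>i<k. a i < a (Suc i)"
    and fa: "\<forall>i<k. \<forall>x. a i \<le> x \<and> x < a (Suc i) \<longrightarrow> f x = frac (x + c i)"
    unfolding IET_def by blast
  define Z where "Z = {x\<in>{0..<1::real}. f x = 0}"
  have "finite Z"
  proof -
    have "inj_on f {0..<1}" using f01 bij_betw_def by blast
    then have "finite (f -` {0} \<inter> {0..<1})" by (intro finite_vimage_IntI) auto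
    moreover have "Z = f -` {0} \<inter> {0..<1}" unfolding Z_def by auto
    ultimately show ?thesis by simp
  qed
  show ?thesis
  proof (rule PTI[of "a ` {..k} \<union> Z"])
    show "finite (a ` {..k} \<union> Z)" using \<open>finite Z\<close> by simp
    fix x y :: real
    assume x0: "0 \<le> x" and xy: "x \<le> y" and y1: "y < 1"
      and nb: "\<And>b. b \<in> a ` {..k} \<union> Z \<Longrightarrow> \<not> (x < b \<and> b \<le> y)"
    obtain i where ik: "i < k" and ai: "a i \<le> x" "x < a (Suc i)"
      using find_piece[OF amono, of x] a0 ak x0 xy y1 by auto
    have "a (Suc i) \<in> a ` {..k}" using ik by auto
    then have "\<not> (x < a (Suc i) \<and> a (Suc i) \<le> y)" using nb by blast
    then have yai: "y < a (Suc i)" using ai by linarith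
    have fx: "f x = frac (x + c i)" using fa ik ai by auto
    have fy: "f y = frac (y + c i)" using fa ik ai yai xy by auto
    have fl: "floor (y + c i) = floor (x + c i)"
    proof (rule ccontr)
      assume ne: "floor (y + c i) \<noteq> floor (x + c i)"
      have le: "floor (x + c i) \<le> floor (y + c i)" using xy by (intro floor_mono) simp
      define t where "t = real_of_int (floor (y + c i)) - c i"
      have f1: "real_of_int (floor (y + c i)) \<le> y + c i" by (rule of_int_floor_le)
      have f2: "x + c i < real_of_int (floor (x + c i)) + 1" by (rule real_of_int_floor_add_one_gt)
      have f3: "floor (x + c i) + 1 \<le> floor (y + c i)" using ne le by simp
      then have f4: "real_of_int (floor (x + c i)) + 1 \<le> real_of_int (floor (y + c i))"
        by (metis of_int_add of_int_le_iff of_int_1)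
      have "t \<le> y" unfolding t_def using f1 by linarith
      moreover have "x < t" unfolding t_def using f2 f4 by linarith
      moreover have "f t = 0"
      proof -
        have "a i \<le> t" "t < a (Suc i)" using \<open>t \<le> y\<close> \<open>x < t\<close> ai yai by auto
        then have "f t = frac (t + c i)" using fa ik by auto
        also have "\<dots> = 0" unfolding t_def by simp
        finally show ?thesis .
      qed
      ultimately have "t \<in> Z" unfolding Z_def using x0 y1 by auto
      then show False using nb[of t] \<open>t \<le> y\<close> \<open>x < t\<close> by auto
    qed
    show "f y - y = f x - x" using fx fy fl unfolding frac_def by simp
  qed
qed

lemma PT_IET:
  assumes bij: "bij_betw f {0..<1} {0..<1}" and out: "\<forall>x. x \<notin> {0..<1} \<longrightarrow> f x = x"
    and pt: "PT f"
  shows "IET f"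
proof -
  obtain F where fF: "finite F" and FF_hol: "\<forall>x y. 0 \<le> x \<longrightarrow> x \<le> y \<longrightarrow> y < 1 \<longrightarrow>
      (\<forall>b\<in>F. \<not> (x < b \<and> b \<le> y)) \<longrightarrow> f y - y = f x - x"
    using pt unfolding PT_def by blast
  note FF = PT_use[OF FF_hol]
  define S where "S = insert 0 (insert 1 (F \<inter> {0<..<1::real}))"
  define L where "L = sorted_list_of_set S"
  have fS: "finite S" unfolding S_def using fF by auto
  have setL: "set L = S" unfolding L_def using fS by simp
  have sL: "sorted_wrt (<) L" unfolding L_def by (rule strict_sorted_list_of_set)
  have S01: "\<And>s. s \<in> S \<Longrightarrow> 0 \<le> s \<and> s \<le> 1" unfolding S_def by auto
  define k where "k = length L - 1"
  define a where "a i = L ! i" for i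
  define c where "c i = f (a i) - a i" for i
  have Lne: "L \<noteq> []" using setL S_def by auto
  then have lenk: "length L = Suc k" unfolding k_def by (cases L) auto
  have Lin: "\<And>i. i < length L \<Longrightarrow> L ! i \<in> S" using setL nth_mem by blast
  have mono: "\<And>i j. i < j \<Longrightarrow> j < length L \<Longrightarrow> L ! i < L ! j"
    using sL sorted_wrt_nth_less by blast
  have a0: "a 0 = 0"
  proof -
    have "0 \<in> set L" using setL S_def by auto
    then obtain j where j: "j < length L" "L ! j = 0" by (auto simp: in_set_conv_nth)
    show ?thesis
    proof (cases j)
      case 0 then show ?thesis using j a_def by simp
    next
      case (Suc j')
      then have "L ! 0 < L ! j" using mono[of 0 j] j by simp
      moreover have "L ! 0 \<ge> 0" using S01[OF Lin[of 0]] Lne by (simp add: length_greater_0_conv)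
      ultimately show ?thesis using j by simp
    qed
  qed
  have ak: "a k = 1"
  proof -
    have "1 \<in> set L" using setL S_def by auto
    then obtain j where j: "j < length L" "L ! j = 1" by (auto simp: in_set_conv_nth)
    show ?thesis
    proof (cases "j = k")
      case True then show ?thesis using j a_def by simp
    next
      case False
      then have "j < k" using j lenk by auto
      then have "L ! j < L ! k" using mono lenk by auto
      moreover have "L ! k \<le> 1" using S01 Lin lenk by auto
      ultimately show ?thesis using j by simp
    qed
  qed
  have amono: "\<forall>i<k. a i < a (Suc i)" using mono lenk a_def by auto
  have pieces: "\<forall>i<k. \<forall>x. a i \<le> x \<and> x < a (Suc i) \<longrightarrow> f x = frac (x + c i)"
  proof (intro allI impI)
    fix i x assume ik: "i < k" and xa: "a i \<le> x \<and> x < a (Suc i)"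
    have ai0: "0 \<le> a i" using S01 Lin lenk ik a_def by auto
    have ai1: "a (Suc i) \<le> 1" using S01 Lin lenk ik a_def by auto
    have "f x - x = f (a i) - a i"
    proof (rule FF)
      show "0 \<le> a i" "a i \<le> x" "x < 1" using ai0 xa ai1 by auto
      fix b assume bF: "b \<in> F"
      show "\<not> (a i < b \<and> b \<le> x)"
      proof
        assume bb: "a i < b \<and> b \<le> x"
        then have "b \<in> S" unfolding S_def using bF ai0 xa ai1 by auto
        then obtain j where j: "j < length L" "L ! j = b" using setL by (auto simp: in_set_conv_nth)
        have "i < j" proof (rule ccontr)
          assume "\<not> i < j"
          then have "j \<le> i" by simp
          then have "L ! j \<le> L ! i" using mono[of j i] lenk ik by (cases "j = i") auto
          then show False using bb j a_def by auto
        qed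
        moreover have "j < Suc i" proof (rule ccontr)
          assume "\<not> j < Suc i"
          then have "Suc i \<le> j" by simp
          then have "L ! (Suc i) \<le> L ! j" using mono[of "Suc i" j] j by (cases "j = Suc i") auto
          then show False using bb j a_def xa by auto
        qed
        ultimately show False by simp
      qed
    qed
    then have "f x = x + c i" unfolding c_def by simp
    moreover have "f x \<in> {0..<1}" using bij xa ai0 ai1 bij_betw_apply by fastforce
    ultimately show "f x = frac (x + c i)" by (simp add: frac_eq)
  qed
  show ?thesis unfolding IET_def using bij out a0 ak amono pieces by blast
qed

lemma IET_iff: "IET f \<longleftrightarrow> bij_betw f {0..<1} {0..<1} \<and> (\<forall>x. x \<notin> {0..<1} \<longrightarrow> f x = x) \<and> PT f"
proof
  assume h: "IET f"
  have "bij_betw f {0..<1} {0..<1} \<and> (\<forall>x. x \<notin> {0..<1} \<longrightarrow> f x = x)"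
    using h unfolding IET_def by (elim conjE) (intro conjI; assumption)
  then show "bij_betw f {0..<1} {0..<1} \<and> (\<forall>x. x \<notin> {0..<1} \<longrightarrow> f x = x) \<and> PT f"
    using IET_PT[OF h] by (elim conjE) (intro conjI; assumption)
next
  assume "bij_betw f {0..<1} {0..<1} \<and> (\<forall>x. x \<notin> {0..<1} \<longrightarrow> f x = x) \<and> PT f"
  then show "IET f" using PT_IET by (elim conjE) 
qed




lemma PT_comp:
  assumes pf: "PT f" and pg: "PT g" and gmap: "\<And>x. x \<in> {0..<1} \<Longrightarrow> g x \<in> {0..<1}"
    and ginj: "inj_on g {0..<1}"
  shows "PT (f \<circ> g)"
proof -
  obtain Ff where fFf: "finite Ff" and Ff_hol: "\<forall>x y. 0 \<le> x \<longrightarrow> x \<le> y \<longrightarrow> y < 1 \<longrightarrow>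
      (\<forall>b\<in>Ff. \<not> (x < b \<and> b \<le> y)) \<longrightarrow> f y - y = f x - x"
    using pf unfolding PT_def by blast
  note Ff = PT_use[OF Ff_hol]
  obtain Fg where fFg: "finite Fg" and Fg_hol: "\<forall>x y. 0 \<le> x \<longrightarrow> x \<le> y \<longrightarrow> y < 1 \<longrightarrow>
      (\<forall>b\<in>Fg. \<not> (x < b \<and> b \<le> y)) \<longrightarrow> g y - y = g x - x"
    using pg unfolding PT_def by blast
  note Fg = PT_use[OF Fg_hol]
  show ?thesis
  proof (rule PTI[of "Fg \<union> (g -` Ff \<inter> {0..<1})"])
    show "finite (Fg \<union> (g -` Ff \<inter> {0..<1}))"
      using fFg fFf ginj by (auto intro: finite_vimage_IntI)
    fix x y :: real
    assume x0: "0 \<le> x" and xy: "x \<le> y" and y1: "y < 1"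
      and nb: "\<And>b. b \<in> Fg \<union> (g -` Ff \<inter> {0..<1}) \<Longrightarrow> \<not> (x < b \<and> b \<le> y)"
    have gt: "g t - t = g x - x" if "x \<le> t" "t \<le> y" for t
    proof (rule Fg)
      show "0 \<le> x" "x \<le> t" "t < 1" using x0 y1 that by auto
      fix b assume "b \<in> Fg" then show "\<not> (x < b \<and> b \<le> t)" using nb[of b] that by auto
    qed
    have gxy: "g y - y = g x - x" using gt[of y] xy by simp
    have u: "g x \<in> {0..<1}" "g y \<in> {0..<1}" using gmap x0 xy y1 by auto
    have "f (g y) - g y = f (g x) - g x"
    proof (rule Ff)
      show "0 \<le> g x" "g x \<le> g y" "g y < 1" using u gxy xy by auto
      fix b assume bF: "b \<in> Ff"
      show "\<not> (g x < b \<and> b \<le> g y)"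
      proof
        assume bb: "g x < b \<and> b \<le> g y"
        define t where "t = b - (g x - x)"
        have t: "x < t" "t \<le> y" using bb gxy unfolding t_def by auto
        have "g t = b" using gt[of t] t unfolding t_def by auto
        then have "t \<in> g -` Ff \<inter> {0..<1}" using bF t x0 y1 by auto
        then show False using nb[of t] t by auto
      qed
    qed
    then show "(f \<circ> g) y - y = (f \<circ> g) x - x" using gxy by simp
  qed
qed

lemma PT_inv:
  assumes pg: "PT g" and gmap: "\<And>x. x \<in> {0..<1} \<Longrightarrow> g x \<in> {0..<1}"
    and ginj: "inj_on g {0..<1}"
    and hmap: "\<And>y. y \<in> {0..<1} \<Longrightarrow> h y \<in> {0..<1}"
    and gh: "\<And>y. y \<in> {0..<1} \<Longrightarrow> g (h y) = y"
  shows "PT h"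
proof -
  obtain Fg where fFg: "finite Fg" and Fg_hol: "\<forall>x y. 0 \<le> x \<longrightarrow> x \<le> y \<longrightarrow> y < 1 \<longrightarrow>
      (\<forall>b\<in>Fg. \<not> (x < b \<and> b \<le> y)) \<longrightarrow> g y - y = g x - x"
    using pg unfolding PT_def by blast
  note Fg = PT_use[OF Fg_hol]
  define C where "C = (\<lambda>p. g p - p) ` (insert 0 (Fg \<inter> {0..<1}))"
  have fC: "finite C" unfolding C_def using fFg by auto
  have inC: "g x - x \<in> C" if x: "0 \<le> x" "x < 1" for x
  proof -
    define P where "P = insert 0 (Fg \<inter> {0..x})"
    have fP: "finite P" "P \<noteq> {}" unfolding P_def using fFg by auto
    define p where "p = Max P"
    have pP: "p \<in> P" unfolding p_def using fP by simp
    have p0: "0 \<le> p" unfolding p_def using fP P_def by (simp add: Max_ge_iff)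
    have px: "p \<le> x" using pP x unfolding P_def by auto
    have "g x - x = g p - p"
    proof (rule Fg[OF p0 px])
      show "x < 1" by fact
      fix b assume "b \<in> Fg"
      show "\<not> (p < b \<and> b \<le> x)"
      proof
        assume bb: "p < b \<and> b \<le> x"
        then have "b \<in> P" using \<open>b \<in> Fg\<close> p0 unfolding P_def by auto
        then have "b \<le> p" unfolding p_def using fP by simp
        then show False using bb by simp
      qed
    qed
    moreover have "p \<in> insert 0 (Fg \<inter> {0..<1})" using pP x px unfolding P_def by auto
    ultimately show ?thesis unfolding C_def by auto
  qed
  have hg: "h (g t) = t" if "t \<in> {0..<1}" for t
  proof -
    have "g (h (g t)) = g t" using gh gmap that by blast
    moreover have "h (g t) \<in> {0..<1}" using hmap gmap that by blast
    ultimately show ?thesis using ginj that unfolding inj_on_def by blast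
  qed
  show ?thesis
  proof (rule PTI[of "(\<lambda>(b, c). b + c) ` (insert 1 Fg \<times> C)"])
    show "finite ((\<lambda>(b, c). b + c) ` (insert 1 Fg \<times> C))" using fFg fC by auto
    fix u v :: real
    assume u0: "0 \<le> u" and uv: "u \<le> v" and v1: "v < 1"
      and nb: "\<And>b. b \<in> (\<lambda>(b, c). b + c) ` (insert 1 Fg \<times> C) \<Longrightarrow> \<not> (u < b \<and> b \<le> v)"
    define x where "x = h u"
    have x01: "x \<in> {0..<1}" unfolding x_def using hmap u0 uv v1 by auto
    have gx: "g x = u" unfolding x_def using gh u0 uv v1 by auto
    define c where "c = g x - x"
    have cC: "c \<in> C" unfolding c_def using inC x01 by auto
    define Q where "Q = insert 1 {b \<in> Fg. x < b}"
    have fQ: "finite Q" "Q \<noteq> {}" unfolding Q_def using fFg by auto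
    define q where "q = Min Q"
    have qQ: "q \<in> Q" unfolding q_def using fQ by simp
    have xq: "x < q" using qQ x01 unfolding Q_def by auto
    have q1: "q \<le> 1" unfolding q_def using fQ Q_def by (simp add: Min_le_iff)
    have gt: "g t - t = c" if "x \<le> t" "t < q" for t
    proof -
      have "g t - t = g x - x"
      proof (rule Fg)
        show "0 \<le> x" "x \<le> t" "t < 1" using x01 that q1 by auto
        fix b assume bF: "b \<in> Fg"
        show "\<not> (x < b \<and> b \<le> t)"
        proof
          assume bb: "x < b \<and> b \<le> t"
          then have "b \<in> Q" using bF unfolding Q_def by auto
          then have "q \<le> b" unfolding q_def using fQ by simp
          then show False using bb that by simp
        qed
      qed
      then show ?thesis unfolding c_def by simp
    qed
    have "q + c \<in> (\<lambda>(b, c). b + c) ` (insert 1 Fg \<times> C)"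
    proof -
      have "q \<in> insert 1 Fg" using qQ unfolding Q_def by auto
      then have "(q, c) \<in> insert 1 Fg \<times> C" using cC by simp
      then show ?thesis by (rule rev_image_eqI) simp
    qed
    then have "\<not> (u < q + c \<and> q + c \<le> v)" by (rule nb)
    moreover have "u < q + c" using xq gx unfolding c_def by simp
    ultimately have vq: "v < q + c" by simp
    define t where "t = v - c"
    have t: "x \<le> t" "t < q" using vq uv gx unfolding t_def c_def by auto
    have gtv: "g t = v" using gt[OF t] unfolding t_def by simp
    have "t \<in> {0..<1}" using t x01 q1 by auto
    then have "h v = t" using hg gtv by auto
    then show "h v - v = h u - u" unfolding t_def c_def x_def[symmetric] using gx by simp
  qed
qed




definition hinv :: "(real \<Rightarrow> real) \<Rightarrow> real \<Rightarrow> real" where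
  "hinv g y = (if y \<in> {0..<1} then inv_into {0..<1} g y else y)"

lemma IET_bij: "IET g \<Longrightarrow> bij_betw g {0..<1} {0..<1}"
  unfolding IET_def by (elim conjE)
lemma IET_out: "IET g \<Longrightarrow> x \<notin> {0..<1} \<Longrightarrow> g x = x"
  unfolding IET_def by (elim conjE) simp
lemma IET_PT': "IET g \<Longrightarrow> PT g" by (rule IET_PT)
lemma IET_map: "IET g \<Longrightarrow> x \<in> {0..<1} \<Longrightarrow> g x \<in> {0..<1}"
  by (rule bij_betw_apply[OF IET_bij])
lemma IET_inj: "IET g \<Longrightarrow> inj_on g {0..<1}"
  by (rule bij_betw_imp_inj_on[OF IET_bij])

lemma IET_intro: "bij_betw f {0..<1} {0..<1} \<Longrightarrow> (\<And>x. x \<notin> {0..<1} \<Longrightarrow> f x = x) \<Longrightarrow> PT f \<Longrightarrow> IET f"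
  by (rule PT_IET) auto

lemma IET_id: "IET id"
proof (rule IET_intro)
  show "bij_betw id {0..<1::real} {0..<1}" by simp
  show "PT id" by (rule PTI[of "{}"]) auto
qed simp

lemma IET_comp: assumes f: "IET f" and g: "IET g" shows "IET (f \<circ> g)"
proof (rule IET_intro)
  show "bij_betw (f \<circ> g) {0..<1} {0..<1}" using IET_bij[OF f] IET_bij[OF g] by (rule bij_betw_trans[rotated])
  show "(f \<circ> g) x = x" if "x \<notin> {0..<1}" for x using IET_out[OF f] IET_out[OF g] that by simp
  show "PT (f \<circ> g)" using IET_PT[OF f] IET_PT[OF g] IET_map[OF g] IET_inj[OF g] by (rule PT_comp)
qed

lemma hinv_props:
  assumes g: "IET g"
  shows "IET (hinv g)" "hinv g \<circ> g = id" "g \<circ> hinv g = id"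
proof -
  have b: "bij_betw g {0..<1} {0..<1}" using g by (rule IET_bij)
  have b2: "bij_betw (inv_into {0..<1} g) {0..<1} {0..<1}" using b by (rule bij_betw_inv_into)
  have bh: "bij_betw (hinv g) {0..<1} {0..<1}"
  proof -
    have "bij_betw (hinv g) {0..<1} {0..<1} = bij_betw (inv_into {0..<1} g) {0..<1} {0..<1}"
      by (rule bij_betw_cong) (simp add: hinv_def)
    then show ?thesis using b2 by simp
  qed
  have hmap: "\<And>y. y \<in> {0..<1} \<Longrightarrow> hinv g y \<in> {0..<1}" by (rule bij_betw_apply[OF bh])
  have gh: "\<And>y. y \<in> {0..<1} \<Longrightarrow> g (hinv g y) = y"
    unfolding hinv_def using b by (simp add: bij_betw_inv_into_right)
  have hg: "\<And>x. x \<in> {0..<1} \<Longrightarrow> hinv g (g x) = x"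
    unfolding hinv_def using b IET_map[OF g] by (simp add: bij_betw_inv_into_left)
  show "IET (hinv g)"
  proof (rule IET_intro)
    show "bij_betw (hinv g) {0..<1} {0..<1}" by fact
    show "hinv g x = x" if "x \<notin> {0..<1}" for x using that unfolding hinv_def by (simp only: if_False)
    show "PT (hinv g)" using IET_PT[OF g] IET_map[OF g] IET_inj[OF g] hmap gh by (rule PT_inv)
  qed
  show "hinv g \<circ> g = id"
  proof
    fix x show "(hinv g \<circ> g) x = id x"
      using hg[of x] IET_out[OF g, of x] by (cases "x \<in> {0..<1}") (auto simp: hinv_def)
  qed
  show "g \<circ> hinv g = id"
  proof
    fix x show "(g \<circ> hinv g) x = id x"
      using gh[of x] IET_out[OF g, of x] by (cases "x \<in> {0..<1}") (auto simp: hinv_def)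
  qed
qed

lemma cent_IET: "g \<in> centralizer r \<Longrightarrow> IET g" unfolding centralizer_def by simp
lemma cent_comm: "g \<in> centralizer r \<Longrightarrow> r \<circ> g = g \<circ> r" unfolding centralizer_def by simp
lemma cent_comm': "g \<in> centralizer r \<Longrightarrow> r (g x) = g (r x)"
  using cent_comm[of g r] by (metis comp_apply)

lemma cent_comp: "f \<in> centralizer r \<Longrightarrow> g \<in> centralizer r \<Longrightarrow> f \<circ> g \<in> centralizer r"
proof -
  assume f: "f \<in> centralizer r" and g: "g \<in> centralizer r"
  have "r \<circ> (f \<circ> g) = (r \<circ> f) \<circ> g" by (simp add: comp_assoc)
  also have "\<dots> = f \<circ> (r \<circ> g)" using f unfolding centralizer_def by (simp add: comp_assoc)
  also have "\<dots> = (f \<circ> g) \<circ> r" using g unfolding centralizer_def by (simp add: comp_assoc)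
  finally show ?thesis using f g IET_comp unfolding centralizer_def by simp
qed

lemma cent_id: "id \<in> centralizer r" unfolding centralizer_def using IET_id by simp

lemma cent_hinv: assumes "g \<in> centralizer r" shows "hinv g \<in> centralizer r"
proof -
  have g: "IET g" using assms by (rule cent_IET)
  note hp = hinv_props[OF g]
  have c: "r \<circ> g = g \<circ> r" using assms by (rule cent_comm)
  have "hinv g \<circ> r = hinv g \<circ> r \<circ> (g \<circ> hinv g)" using hp(3) by simp
  also have "\<dots> = hinv g \<circ> (r \<circ> g) \<circ> hinv g" by (simp add: comp_assoc)
  also have "\<dots> = (hinv g \<circ> g) \<circ> r \<circ> hinv g" using c by (simp add: comp_assoc)
  also have "\<dots> = r \<circ> hinv g" using hp(2) by simp
  finally show ?thesis unfolding centralizer_def using hp(1) by simp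
qed

lemma cent_group: "group (centralizer_group r)"
proof (rule groupI)
  fix x y assume "x \<in> carrier (centralizer_group r)" "y \<in> carrier (centralizer_group r)"
  then show "x \<otimes>\<^bsub>centralizer_group r\<^esub> y \<in> carrier (centralizer_group r)"
    by (simp add: centralizer_group_def cent_comp)
next
  show "\<one>\<^bsub>centralizer_group r\<^esub> \<in> carrier (centralizer_group r)"
    by (simp add: centralizer_group_def cent_id)
next
  fix x y z show "x \<otimes>\<^bsub>centralizer_group r\<^esub> y \<otimes>\<^bsub>centralizer_group r\<^esub> z =
       x \<otimes>\<^bsub>centralizer_group r\<^esub> (y \<otimes>\<^bsub>centralizer_group r\<^esub> z)"
    by (simp add: centralizer_group_def comp_assoc)
next
  fix x show "\<one>\<^bsub>centralizer_group r\<^esub> \<otimes>\<^bsub>centralizer_group r\<^esub> x = x"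
    by (simp add: centralizer_group_def)
next
  fix x assume "x \<in> carrier (centralizer_group r)"
  then have "x \<in> centralizer r" by (simp add: centralizer_group_def)
  then show "\<exists>y\<in>carrier (centralizer_group r). y \<otimes>\<^bsub>centralizer_group r\<^esub> x = \<one>\<^bsub>centralizer_group r\<^esub>"
    using cent_hinv hinv_props(2)[OF cent_IET] by (intro bexI[of _ "hinv x"]) (auto simp: centralizer_group_def)
qed

lemma cent_inv: assumes "g \<in> centralizer r" shows "inv\<^bsub>centralizer_group r\<^esub> g = hinv g"
proof (rule group.inv_equality[OF cent_group])
  show "hinv g \<otimes>\<^bsub>centralizer_group r\<^esub> g = \<one>\<^bsub>centralizer_group r\<^esub>"
    using hinv_props(2)[OF cent_IET[OF assms]] by (simp add: centralizer_group_def)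
qed (use assms cent_hinv in \<open>auto simp: centralizer_group_def\<close>)




definition sig :: "nat \<Rightarrow> real \<Rightarrow> int" where "sig n z = \<lfloor>real n * z\<rfloor>"
definition pos :: "nat \<Rightarrow> real \<Rightarrow> real" where "pos n z = z - of_int (sig n z) / real n"
definition mk :: "nat \<Rightarrow> int \<Rightarrow> real \<Rightarrow> real" where "mk n i \<rho> = of_int i / real n + \<rho>"

lemma mk_sig_pos: "mk n (sig n z) (pos n z) = z" unfolding mk_def pos_def by simp

lemma sig_range: assumes "n > 0" "z \<in> {0..<1}" shows "0 \<le> sig n z" "sig n z < int n"
proof -
  have "0 \<le> real n * z" "real n * z < real n" using assms by auto
  then show "0 \<le> sig n z" "sig n z < int n" unfolding sig_def by (simp, linarith)
qed

lemma pos_range: assumes "n > 0" shows "0 \<le> pos n z" "pos n z < 1 / real n"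
proof -
  have a: "of_int (sig n z) \<le> real n * z" "real n * z < of_int (sig n z) + 1"
    unfolding sig_def by linarith+
  have np: "real n > 0" using assms by simp
  have "pos n z = (real n * z - of_int (sig n z)) / real n" unfolding pos_def using np by (simp add: field_simps)
  then show "0 \<le> pos n z" "pos n z < 1 / real n" using a np by (simp_all add: divide_strict_right_mono)
qed

lemma sig_mk: assumes "n > 0" "0 \<le> \<rho>" "\<rho> < 1 / real n" shows "sig n (mk n i \<rho>) = i"
proof -
  have np: "real n > 0" using assms by simp
  have e: "real n * mk n i \<rho> = of_int i + real n * \<rho>" unfolding mk_def using np by (simp add: field_simps)
  have "0 \<le> real n * \<rho>" "real n * \<rho> < 1" using assms np by (simp_all add: field_simps)
  then show ?thesis unfolding sig_def e by (simp add: floor_eq_iff)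
qed

lemma pos_mk: assumes "n > 0" "0 \<le> \<rho>" "\<rho> < 1 / real n" shows "pos n (mk n i \<rho>) = \<rho>"
  using sig_mk[OF assms] unfolding pos_def by (simp add: mk_def)

lemma mk_in: assumes "n > 0" "0 \<le> i" "i < int n" "0 \<le> \<rho>" "\<rho> < 1 / real n"
  shows "mk n i \<rho> \<in> {0..<1}"
proof -
  have np: "real n > 0" using assms by simp
  have "of_int i + 1 \<le> real n" using assms by linarith
  then have "of_int i / real n + 1 / real n \<le> 1" using np by (simp add: field_simps)
  moreover have "0 \<le> of_int i / real n" using assms by simp
  ultimately show ?thesis unfolding mk_def using assms by auto
qed

lemma eq_by_sig_pos: "sig n z = sig n w \<Longrightarrow> pos n z = pos n w \<Longrightarrow> z = w"
  by (metis mk_sig_pos)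

lemma sig_shift: assumes "n > 0" shows "sig n (z + of_int k / real n) = sig n z + k"
proof -
  have "real n * (z + of_int k / real n) = real n * z + of_int k" using assms by (simp add: field_simps)
  then show ?thesis unfolding sig_def by simp
qed

lemma pos_shift: assumes "n > 0" shows "pos n (z + of_int k / real n) = pos n z"
  unfolding pos_def sig_shift[OF assms] using assms by (simp add: field_simps)

lemma pos_int: assumes "n > 0" shows "pos n (z + of_int m) = pos n z"
proof -
  have e: "z + of_int m = z + of_int (m * int n) / real n" using assms by simp
  show ?thesis by (subst e, rule pos_shift[OF assms])
qed

lemma pos_frac: assumes "n > 0" shows "pos n (frac z) = pos n z"
proof -
  have e: "frac z = z + of_int (- \<lfloor>z\<rfloor>)" unfolding frac_def by simp
  show ?thesis by (subst e, rule pos_int[OF assms])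
qed

lemma rot_mk: assumes "n > 0" "0 \<le> i" "i < int n" "0 \<le> \<rho>" "\<rho> < 1 / real n"
  shows "rot n (mk n i \<rho>) = mk n ((i + 1) mod int n) \<rho>"
proof -
  have np: "real n > 0" using assms by simp
  have inn: "mk n i \<rho> \<in> {0..<1}" using mk_in[OF assms] .
  have e: "mk n i \<rho> + 1 / real n = mk n (i + 1) \<rho>" unfolding mk_def using np by (simp add: field_simps)
  have r: "rot n (mk n i \<rho>) = frac (mk n (i + 1) \<rho>)" unfolding rot_def using inn e by simp
  show ?thesis
  proof (cases "i + 1 < int n")
    case True
    then have "mk n (i + 1) \<rho> \<in> {0..<1}" using mk_in[OF assms(1) _ True assms(4,5)] assms(2) by simp
    then show ?thesis using r True assms(2) by simp
  next
    case False
    then have i1: "i + 1 = int n" using assms by simp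
    have "of_int (i + 1) / real n = 1" using np by (simp only: i1 of_int_of_nat_eq) simp
    then have mm: "mk n (i + 1) \<rho> = \<rho> + 1" unfolding mk_def by simp
    have "1 / real n \<le> 1" using assms(1) by simp
    then have "\<rho> \<in> {0..<1}" using assms(4,5) by simp
    then have "frac (mk n (i + 1) \<rho>) = \<rho>" unfolding mm frac_1_eq by simp
    then show ?thesis using r i1 by (simp add: mk_def)
  qed
qed

lemma rotpow_mk: assumes "n > 0" "0 \<le> i" "i < int n" "0 \<le> \<rho>" "\<rho> < 1 / real n"
  shows "(rot n ^^ j) (mk n i \<rho>) = mk n ((i + int j) mod int n) \<rho>"
proof (induction j)
  case 0 then show ?case using assms by simp
next
  case (Suc j)
  have "(rot n ^^ Suc j) (mk n i \<rho>) = rot n (mk n ((i + int j) mod int n) \<rho>)" using Suc by simp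
  also have "\<dots> = mk n (((i + int j) mod int n + 1) mod int n) \<rho>"
    using assms by (intro rot_mk) auto
  also have "((i + int j) mod int n + 1) mod int n = (i + int (Suc j)) mod int n"
    by (metis mod_add_left_eq add.assoc of_nat_Suc add.commute)
  finally show ?case .
qed

lemma comm_pow: assumes "r \<circ> g = g \<circ> r" shows "g ((r ^^ j) x) = (r ^^ j) (g x)"
proof (induction j)
  case 0 then show ?case by simp
next
  case (Suc j)
  have "g ((r ^^ Suc j) x) = g (r ((r ^^ j) x))" by simp
  also have "\<dots> = r (g ((r ^^ j) x))" using assms by (metis comp_apply)
  also have "\<dots> = (r ^^ Suc j) (g x)" using Suc by simp
  finally show ?case .
qed

lemma rotpow_pos: assumes "n > 0" "z \<in> {0..<1}"
  shows "(rot n ^^ j) z \<in> {0..<1}" "pos n ((rot n ^^ j) z) = pos n z"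
proof -
  have z: "z = mk n (sig n z) (pos n z)" by (simp add: mk_sig_pos)
  note sr = sig_range[OF assms] and pr = pos_range[OF assms(1), of z]
  have e: "(rot n ^^ j) z = mk n ((sig n z + int j) mod int n) (pos n z)"
    by (subst z, rule rotpow_mk) (use assms sr pr in auto)
  have m: "0 \<le> (sig n z + int j) mod int n" "(sig n z + int j) mod int n < int n" using assms by auto
  show "(rot n ^^ j) z \<in> {0..<1}" unfolding e using mk_in[OF assms(1) m pr] .
  show "pos n ((rot n ^^ j) z) = pos n z" unfolding e using pos_mk[OF assms(1) pr] .
qed

lemma same_pos_rot: assumes "n > 0" "a \<in> {0..<1}" "b \<in> {0..<1}" "pos n a = pos n b"
  shows "\<exists>j. b = (rot n ^^ j) a"
proof -
  note sa = sig_range[OF assms(1,2)] and sb = sig_range[OF assms(1,3)] and pr = pos_range[OF assms(1), of a]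
  define j where "j = nat ((sig n b - sig n a) mod int n)"
  have ja: "int j = (sig n b - sig n a) mod int n" unfolding j_def using assms by simp
  have "(rot n ^^ j) a = (rot n ^^ j) (mk n (sig n a) (pos n a))" by (simp add: mk_sig_pos)
  also have "\<dots> = mk n ((sig n a + int j) mod int n) (pos n a)"
    by (rule rotpow_mk) (use assms sa pr in auto)
  also have "(sig n a + int j) mod int n = sig n b"
  proof -
    have "(sig n a + int j) mod int n = (sig n a + (sig n b - sig n a)) mod int n"
      unfolding ja by (simp add: mod_add_right_eq)
    also have "\<dots> = sig n b" using sb by simp
    finally show ?thesis .
  qed
  finally have "(rot n ^^ j) a = mk n (sig n b) (pos n b)" using assms(4) by simp
  then have "(rot n ^^ j) a = b" by (simp add: mk_sig_pos)
  then show ?thesis by (intro exI[of _ j]) simp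
qed

lemma pos_cent: assumes "n > 0" "g \<in> centralizer (rot n)" "a \<in> {0..<1}" "b \<in> {0..<1}" "pos n a = pos n b"
  shows "pos n (g a) = pos n (g b)"
proof -
  obtain j where b: "b = (rot n ^^ j) a" using same_pos_rot[OF assms(1,3,4,5)] by blast
  have "g b = (rot n ^^ j) (g a)" unfolding b by (rule comm_pow[OF cent_comm[OF assms(2)]])
  moreover have "g a \<in> {0..<1}" using IET_map[OF cent_IET[OF assms(2)] assms(3)] .
  ultimately show ?thesis using rotpow_pos[OF assms(1)] by simp
qed

lemma P_char: assumes "n > 0"
  shows "g \<in> P_set n \<longleftrightarrow> g \<in> centralizer (rot n) \<and> (\<forall>x\<in>{0..<1}. pos n (g x) = pos n x)"
proof
  assume g: "g \<in> P_set n"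
  then have c: "g \<in> centralizer (rot n)" unfolding P_set_def by simp
  have "pos n (g x) = pos n x" if x: "x \<in> {0..<1}" for x
  proof -
    have "\<exists>k::int. g x = frac (x + of_int k / real n)" using g x unfolding P_set_def by blast
    then obtain k :: int where "g x = frac (x + of_int k / real n)" by blast
    then show ?thesis using pos_frac[OF assms] pos_shift[OF assms] by simp
  qed
  then show "g \<in> centralizer (rot n) \<and> (\<forall>x\<in>{0..<1}. pos n (g x) = pos n x)" using c by simp
next
  assume h: "g \<in> centralizer (rot n) \<and> (\<forall>x\<in>{0..<1}. pos n (g x) = pos n x)"
  have "\<exists>k::int. g x = frac (x + of_int k / real n)" if x: "x \<in> {0..<1}" for x
  proof -
    have c: "g \<in> centralizer (rot n)" using h by simp
    have gx: "g x \<in> {0..<1}" by (rule IET_map[OF cent_IET[OF c] x])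
    define k where "k = sig n (g x) - sig n x"
    have "x + of_int k / real n = mk n (sig n x + k) (pos n x)"
      unfolding mk_def pos_def using assms by (simp add: field_simps)
    also have "\<dots> = mk n (sig n (g x)) (pos n (g x))" using h x unfolding k_def by simp
    also have "\<dots> = g x" by (rule mk_sig_pos)
    finally show ?thesis using gx by (intro exI[of _ k]) simp
  qed
  then show "g \<in> P_set n" using h unfolding P_set_def by simp
qed

lemma Iint_iff: assumes "n > 0" shows "z \<in> Iint n i \<longleftrightarrow> sig n z = int i - 1"
proof -
  have np: "real n > 0" using assms by simp
  have "z \<in> Iint n i \<longleftrightarrow> real i - 1 \<le> real n * z \<and> real n * z < real i"
    unfolding Iint_def using np by (simp add: field_simps)
  also have "\<dots> \<longleftrightarrow> sig n z = int i - 1" unfolding sig_def by (simp add: floor_eq_iff)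
  finally show ?thesis .
qed




lemma hinv_map: "g \<in> centralizer r \<Longrightarrow> y \<in> {0..<1} \<Longrightarrow> hinv g y \<in> {0..<1}"
  by (rule IET_map[OF hinv_props(1)[OF cent_IET]])
lemma hinv_right: "g \<in> centralizer r \<Longrightarrow> g (hinv g y) = y"
  using hinv_props(3)[OF cent_IET, of g r] by (metis comp_apply id_apply)
lemma hinv_left: "g \<in> centralizer r \<Longrightarrow> hinv g (g y) = y"
  using hinv_props(2)[OF cent_IET, of g r] by (metis comp_apply id_apply)
lemma cent_map: "g \<in> centralizer r \<Longrightarrow> x \<in> {0..<1} \<Longrightarrow> g x \<in> {0..<1}"
  by (rule IET_map[OF cent_IET])

lemma rot_props: assumes "n > 0" "z \<in> {0..<1}"
  shows "rot n z \<in> {0..<1}" "pos n (rot n z) = pos n z" "sig n (rot n z) = (sig n z + 1) mod int n"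
proof -
  note sr = sig_range[OF assms] and pr = pos_range[OF assms(1), of z]
  have e: "rot n z = mk n ((sig n z + 1) mod int n) (pos n z)"
    using rot_mk[OF assms(1) sr pr] by (simp add: mk_sig_pos)
  have m: "0 \<le> (sig n z + 1) mod int n" "(sig n z + 1) mod int n < int n" using assms by auto
  show "rot n z \<in> {0..<1}" unfolding e by (rule mk_in[OF assms(1) m pr])
  show "pos n (rot n z) = pos n z" unfolding e by (rule pos_mk[OF assms(1) pr])
  show "sig n (rot n z) = (sig n z + 1) mod int n" unfolding e by (rule sig_mk[OF assms(1) pr])
qed

lemma no_jump: assumes n: "n > 0" and u: "0 \<le> u" "u \<le> v" "v < 1"
  and nb: "\<And>j. j \<in> {0..<int n} \<Longrightarrow> \<not> (u < of_int j / real n \<and> of_int j / real n \<le> v)"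
  shows "sig n u = sig n v"
proof (rule ccontr)
  assume ne: "sig n u \<noteq> sig n v"
  have np: "real n > 0" using n by simp
  have le: "sig n u \<le> sig n v" unfolding sig_def using u np by (intro floor_mono) simp
  define j where "j = sig n v"
  have j: "j \<in> {0..<int n}" unfolding j_def using sig_range[OF n, of v] u by auto
  have a1: "of_int j \<le> real n * v" unfolding j_def sig_def by (rule of_int_floor_le)
  have a2: "real n * u < of_int (sig n u) + 1" unfolding sig_def by (rule real_of_int_floor_add_one_gt)
  have a3: "sig n u + 1 \<le> j" using ne le unfolding j_def by simp
  then have a4: "of_int (sig n u) + 1 \<le> (of_int j :: real)" by (metis of_int_add of_int_le_iff of_int_1)
  have "of_int j / real n \<le> v" using a1 np by (simp add: divide_le_eq mult.commute)
  moreover have "u < of_int j / real n" using a2 a4 np by (simp add: less_divide_eq mult.commute)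
  ultimately show False using nb[OF j] by simp
qed

definition edef :: "nat \<Rightarrow> (real \<Rightarrow> real) \<Rightarrow> real \<Rightarrow> real" where
  "edef n g x = (if x \<in> {0..<1} then mk n (sig n x) (pos n (g x)) else x)"

context
  fixes n :: nat and g :: "real \<Rightarrow> real"
  assumes n0: "n > 0" and gC: "g \<in> centralizer (rot n)"
begin

lemma e_props: assumes x: "x \<in> {0..<1}"
  shows "edef n g x \<in> {0..<1}" "sig n (edef n g x) = sig n x" "pos n (edef n g x) = pos n (g x)"
proof -
  note sr = sig_range[OF n0 x] and pr = pos_range[OF n0, of "g x"]
  have e: "edef n g x = mk n (sig n x) (pos n (g x))" unfolding edef_def using x by simp
  show "edef n g x \<in> {0..<1}" unfolding e by (rule mk_in[OF n0 sr pr])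
  show "sig n (edef n g x) = sig n x" unfolding e by (rule sig_mk[OF n0 pr])
  show "pos n (edef n g x) = pos n (g x)" unfolding e by (rule pos_mk[OF n0 pr])
qed

lemma e_inj: "inj_on (edef n g) {0..<1}"
proof (rule inj_onI)
  fix x y assume x: "x \<in> {0..<1}" and y: "y \<in> {0..<1}" and eq: "edef n g x = edef n g y"
  have s: "sig n x = sig n y" using e_props(2)[OF x] e_props(2)[OF y] eq by simp
  have p: "pos n (g x) = pos n (g y)" using e_props(3)[OF x] e_props(3)[OF y] eq by simp
  have "pos n (hinv g (g x)) = pos n (hinv g (g y))"
    by (rule pos_cent[OF n0 cent_hinv[OF gC] cent_map[OF gC x] cent_map[OF gC y] p])
  then have "pos n x = pos n y" using hinv_left[OF gC] by simp
  then show "x = y" by (rule eq_by_sig_pos[OF s])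
qed

lemma e_surj: assumes z: "z \<in> {0..<1}" shows "\<exists>x\<in>{0..<1}. edef n g x = z"
proof -
  note pr = pos_range[OF n0, of z]
  have m0: "mk n 0 (pos n z) \<in> {0..<1}" using mk_in[OF n0 _ _ pr] n0 by simp
  define w where "w = hinv g (mk n 0 (pos n z))"
  have w: "w \<in> {0..<1}" unfolding w_def by (rule hinv_map[OF gC m0])
  have gw: "g w = mk n 0 (pos n z)" unfolding w_def by (rule hinv_right[OF gC])
  note sr = sig_range[OF n0 z] and pw = pos_range[OF n0, of w]
  define x where "x = mk n (sig n z) (pos n w)"
  have x: "x \<in> {0..<1}" unfolding x_def by (rule mk_in[OF n0 sr pw])
  have sx: "sig n x = sig n z" unfolding x_def by (rule sig_mk[OF n0 pw])
  have px: "pos n x = pos n w" unfolding x_def by (rule pos_mk[OF n0 pw])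
  have "pos n (g x) = pos n (g w)" by (rule pos_cent[OF n0 gC x w px])
  also have "\<dots> = pos n z" unfolding gw by (rule pos_mk[OF n0 pr])
  finally have "edef n g x = mk n (sig n z) (pos n z)" unfolding edef_def using x sx by simp
  then have "edef n g x = z" by (simp add: mk_sig_pos)
  then show ?thesis using x by blast
qed

lemma e_bij: "bij_betw (edef n g) {0..<1} {0..<1}"
  unfolding bij_betw_def
proof
  show "inj_on (edef n g) {0..<1}" by (rule e_inj)
  show "edef n g ` {0..<1} = {0..<1}"
  proof
    show "edef n g ` {0..<1} \<subseteq> {0..<1}" using e_props(1) by blast
    show "{0..<1} \<subseteq> edef n g ` {0..<1}" using e_surj by blast
  qed
qed

lemma e_PT: "PT (edef n g)"
proof -
  obtain Fg where fFg: "finite Fg" and Fg_hol: "\<forall>x y. 0 \<le> x \<longrightarrow> x \<le> y \<longrightarrow> y < 1 \<longrightarrow>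
      (\<forall>b\<in>Fg. \<not> (x < b \<and> b \<le> y)) \<longrightarrow> g y - y = g x - x"
    using IET_PT[OF cent_IET[OF gC]] unfolding PT_def by blast
  note Fg = PT_use[OF Fg_hol]
  define J where "J = (\<lambda>j. of_int j / real n) ` {0..<int n}"
  have fJ: "finite J" unfolding J_def by simp
  show ?thesis
  proof (rule PTI[of "Fg \<union> J \<union> (g -` J \<inter> {0..<1})"])
    show "finite (Fg \<union> J \<union> (g -` J \<inter> {0..<1}))"
      using fFg fJ IET_inj[OF cent_IET[OF gC]] by (auto intro: finite_vimage_IntI)
    fix x y :: real
    assume x0: "0 \<le> x" and xy: "x \<le> y" and y1: "y < 1"
      and nb: "\<And>b. b \<in> Fg \<union> J \<union> (g -` J \<inter> {0..<1}) \<Longrightarrow> \<not> (x < b \<and> b \<le> y)"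
    have gt: "g t - t = g x - x" if "x \<le> t" "t \<le> y" for t
    proof (rule Fg)
      show "0 \<le> x" "x \<le> t" "t < 1" using x0 y1 that by auto
      fix b assume "b \<in> Fg" then show "\<not> (x < b \<and> b \<le> t)" using nb[of b] that by auto
    qed
    have gxy: "g y - y = g x - x" using gt[of y] xy by simp
    have u: "g x \<in> {0..<1}" "g y \<in> {0..<1}" using cent_map[OF gC] x0 xy y1 by auto
    have s1: "sig n x = sig n y"
    proof (rule no_jump[OF n0 x0 xy y1])
      fix j assume "j \<in> {0..<int n}"
      then have "of_int j / real n \<in> J" unfolding J_def by blast
      then show "\<not> (x < of_int j / real n \<and> of_int j / real n \<le> y)" using nb by blast
    qed
    have s2: "sig n (g x) = sig n (g y)"
    proof (rule no_jump[OF n0])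
      show "0 \<le> g x" "g x \<le> g y" "g y < 1" using u gxy xy by auto
      fix j assume j: "j \<in> {0..<int n}"
      show "\<not> (g x < of_int j / real n \<and> of_int j / real n \<le> g y)"
      proof
        assume bb: "g x < of_int j / real n \<and> of_int j / real n \<le> g y"
        define t where "t = of_int j / real n - (g x - x)"
        have t: "x < t" "t \<le> y" using bb gxy unfolding t_def by auto
        have "g t = of_int j / real n" using gt[of t] t unfolding t_def by auto
        then have "t \<in> g -` J \<inter> {0..<1}" using j t x0 y1 unfolding J_def by auto
        then show False using nb[of t] t by auto
      qed
    qed
    have ex: "edef n g x = of_int (sig n x) / real n + g x - of_int (sig n (g x)) / real n"
      unfolding edef_def mk_def pos_def using x0 xy y1 by simp
    have ey: "edef n g y = of_int (sig n y) / real n + g y - of_int (sig n (g y)) / real n"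
      unfolding edef_def mk_def pos_def using x0 xy y1 by simp
    show "edef n g y - y = edef n g x - x" unfolding ex ey s1 s2 using gxy by simp
  qed
qed

lemma e_IET: "IET (edef n g)"
proof (rule IET_intro)
  show "bij_betw (edef n g) {0..<1} {0..<1}" by (rule e_bij)
  show "edef n g x = x" if "x \<notin> {0..<1}" for x unfolding edef_def by (rule if_not_P[OF that])
  show "PT (edef n g)" by (rule e_PT)
qed

lemma e_comm: "rot n \<circ> edef n g = edef n g \<circ> rot n"
proof
  fix x
  show "(rot n \<circ> edef n g) x = (edef n g \<circ> rot n) x"
  proof (cases "x \<in> {0..<1}")
    case False
    have r: "rot n x = x" unfolding rot_def by (rule if_not_P[OF False])
    have e: "edef n g x = x" unfolding edef_def by (rule if_not_P[OF False])
    show ?thesis by (simp add: r e)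
  next
    case x: True
    note rp = rot_props[OF n0 x]
    have gx: "g x \<in> {0..<1}" by (rule cent_map[OF gC x])
    have "(edef n g \<circ> rot n) x = mk n (sig n (rot n x)) (pos n (g (rot n x)))"
      unfolding edef_def using rp(1) by simp
    also have "pos n (g (rot n x)) = pos n (g x)"
      using cent_comm'[OF gC, of x] rot_props(2)[OF n0 gx] by simp
    also have "sig n (rot n x) = (sig n x + 1) mod int n" by (rule rp(3))
    finally have r1: "(edef n g \<circ> rot n) x = mk n ((sig n x + 1) mod int n) (pos n (g x))" .
    note sr = sig_range[OF n0 x] and pr = pos_range[OF n0, of "g x"]
    have "(rot n \<circ> edef n g) x = rot n (mk n (sig n x) (pos n (g x)))" unfolding edef_def using x by simp
    also have "\<dots> = mk n ((sig n x + 1) mod int n) (pos n (g x))" by (rule rot_mk[OF n0 sr pr])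
    finally show ?thesis using r1 by simp
  qed
qed

lemma e_C: "edef n g \<in> centralizer (rot n)"
  unfolding centralizer_def using e_IET e_comm by simp

lemma Iint_sub: assumes "i \<in> {1..n}" "z \<in> Iint n i" shows "z \<in> {0..<1}"
proof -
  have s: "sig n z = int i - 1" using assms Iint_iff[OF n0] by simp
  have m: "0 \<le> sig n z" "sig n z < int n" using s assms(1) by auto
  have "z = mk n (sig n z) (pos n z)" by (simp add: mk_sig_pos)
  also have "\<dots> \<in> {0..<1}" by (rule mk_in[OF n0 m pos_range[OF n0]])
  finally show ?thesis .
qed

lemma e_E: "edef n g \<in> E_Delta n"
proof -
  have "edef n g ` Iint n i = Iint n i" if i: "i \<in> {1..n}" for i
  proof
    show "edef n g ` Iint n i \<subseteq> Iint n i"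
    proof
      fix w assume "w \<in> edef n g ` Iint n i"
      then obtain z where z: "z \<in> Iint n i" "w = edef n g z" by blast
      have z01: "z \<in> {0..<1}" by (rule Iint_sub[OF i z(1)])
      show "w \<in> Iint n i" using z e_props(2)[OF z01] Iint_iff[OF n0] by simp
    qed
    show "Iint n i \<subseteq> edef n g ` Iint n i"
    proof
      fix z assume z: "z \<in> Iint n i"
      have z01: "z \<in> {0..<1}" by (rule Iint_sub[OF i z])
      obtain x where x: "x \<in> {0..<1}" "edef n g x = z" using e_surj[OF z01] by blast
      have "x \<in> Iint n i" using z e_props(2)[OF x(1)] x(2) Iint_iff[OF n0] by simp
      then show "z \<in> edef n g ` Iint n i" using x(2) by blast
    qed
  qed
  then show ?thesis unfolding E_Delta_def using e_C by simp
qed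

end




lemma P_sub: "P_set n \<subseteq> centralizer (rot n)" unfolding P_set_def by auto
lemma E_sub: "E_Delta n \<subseteq> centralizer (rot n)" unfolding E_Delta_def by auto

lemma P_subgroup: assumes n0: "n > 0" shows "subgroup (P_set n) (centralizer_group (rot n))"
proof (rule group.subgroupI[OF cent_group])
  show "P_set n \<subseteq> carrier (centralizer_group (rot n))" using P_sub by (simp add: centralizer_group_def)
  have "id \<in> P_set n" using P_char[OF n0] cent_id by simp
  then show "P_set n \<noteq> {}" by blast
next
  fix a assume a: "a \<in> P_set n"
  then have aC: "a \<in> centralizer (rot n)" and ap: "\<forall>x\<in>{0..<1}. pos n (a x) = pos n x"
    using P_char[OF n0] by auto
  have "pos n (hinv a y) = pos n y" if y: "y \<in> {0..<1}" for y
  proof -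
    have "pos n (a (hinv a y)) = pos n (hinv a y)" using ap hinv_map[OF aC y] by blast
    then show ?thesis using hinv_right[OF aC] by simp
  qed
  then have "hinv a \<in> P_set n" using P_char[OF n0] cent_hinv[OF aC] by simp
  then show "inv\<^bsub>centralizer_group (rot n)\<^esub> a \<in> P_set n" using cent_inv[OF aC] by simp
next
  fix a b assume a: "a \<in> P_set n" and b: "b \<in> P_set n"
  then have aC: "a \<in> centralizer (rot n)" and ap: "\<forall>x\<in>{0..<1}. pos n (a x) = pos n x"
    and bC: "b \<in> centralizer (rot n)" and bp: "\<forall>x\<in>{0..<1}. pos n (b x) = pos n x"
    using P_char[OF n0] by auto
  have "pos n (a (b x)) = pos n x" if x: "x \<in> {0..<1}" for x
    using ap bp cent_map[OF bC x] x by simp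
  then have "a \<circ> b \<in> P_set n" using P_char[OF n0] cent_comp[OF aC bC] by simp
  then show "a \<otimes>\<^bsub>centralizer_group (rot n)\<^esub> b \<in> P_set n" by (simp add: centralizer_group_def)
qed

lemma P_normal: assumes n0: "n > 0" shows "P_set n \<lhd> centralizer_group (rot n)"
proof -
  have "\<forall>x\<in>carrier (centralizer_group (rot n)). \<forall>h\<in>P_set n.
     x \<otimes>\<^bsub>centralizer_group (rot n)\<^esub> h \<otimes>\<^bsub>centralizer_group (rot n)\<^esub> inv\<^bsub>centralizer_group (rot n)\<^esub> x \<in> P_set n"
  proof (intro ballI)
    fix x h assume x: "x \<in> carrier (centralizer_group (rot n))" and h: "h \<in> P_set n"
    have xC: "x \<in> centralizer (rot n)" using x by (simp add: centralizer_group_def)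
    have hC: "h \<in> centralizer (rot n)" and hp: "\<forall>x\<in>{0..<1}. pos n (h x) = pos n x"
      using h P_char[OF n0] by auto
    have e: "x \<otimes>\<^bsub>centralizer_group (rot n)\<^esub> h \<otimes>\<^bsub>centralizer_group (rot n)\<^esub> inv\<^bsub>centralizer_group (rot n)\<^esub> x
      = x \<circ> h \<circ> hinv x" using cent_inv[OF xC] by (simp add: centralizer_group_def)
    have "pos n ((x \<circ> h \<circ> hinv x) y) = pos n y" if y: "y \<in> {0..<1}" for y
    proof -
      define w where "w = hinv x y"
      have w: "w \<in> {0..<1}" unfolding w_def by (rule hinv_map[OF xC y])
      have hw: "h w \<in> {0..<1}" by (rule cent_map[OF hC w])
      have "pos n (x (h w)) = pos n (x w)"
        by (rule pos_cent[OF n0 xC hw w]) (use hp w in simp)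
      then show ?thesis unfolding w_def using hinv_right[OF xC] by simp
    qed
    moreover have "x \<circ> h \<circ> hinv x \<in> centralizer (rot n)"
      using cent_comp[OF cent_comp[OF xC hC] cent_hinv[OF xC]] .
    ultimately show "x \<otimes>\<^bsub>centralizer_group (rot n)\<^esub> h \<otimes>\<^bsub>centralizer_group (rot n)\<^esub> inv\<^bsub>centralizer_group (rot n)\<^esub> x \<in> P_set n"
      unfolding e using P_char[OF n0] by simp
  qed
  then show ?thesis using group.normal_inv_iff[OF cent_group] P_subgroup[OF n0] by blast
qed

lemma PE_int: assumes n0: "n > 0" shows "P_set n \<inter> E_Delta n = {id}"
proof
  show "{id} \<subseteq> P_set n \<inter> E_Delta n"
    using P_char[OF n0] cent_id unfolding E_Delta_def by simp
  show "P_set n \<inter> E_Delta n \<subseteq> {id}"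
  proof
    fix g assume g: "g \<in> P_set n \<inter> E_Delta n"
    then have gC: "g \<in> centralizer (rot n)" and gp: "\<forall>x\<in>{0..<1}. pos n (g x) = pos n x"
      and gI: "\<forall>i\<in>{1..n}. g ` Iint n i = Iint n i"
      using P_char[OF n0] unfolding E_Delta_def by auto
    have "g x = x" for x
    proof (cases "x \<in> {0..<1}")
      case False then show ?thesis using IET_out[OF cent_IET[OF gC]] by simp
    next
      case x: True
      note sr = sig_range[OF n0 x]
      define i where "i = nat (sig n x) + 1"
      have i: "i \<in> {1..n}" unfolding i_def using sr by auto
      have xi: "x \<in> Iint n i" unfolding Iint_iff[OF n0] i_def using sr by simp
      then have "g x \<in> Iint n i" using gI i by blast
      then have "sig n (g x) = sig n x" using xi Iint_iff[OF n0] by simp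
      moreover have "pos n (g x) = pos n x" using gp x by blast
      ultimately show ?thesis by (rule eq_by_sig_pos)
    qed
    then show "g \<in> {id}" by auto
  qed
qed

lemma C_prod: assumes n0: "n > 0"
  shows "centralizer (rot n) = P_set n <#>\<^bsub>centralizer_group (rot n)\<^esub> E_Delta n"
proof
  show "P_set n <#>\<^bsub>centralizer_group (rot n)\<^esub> E_Delta n \<subseteq> centralizer (rot n)"
  proof
    fix f assume "f \<in> P_set n <#>\<^bsub>centralizer_group (rot n)\<^esub> E_Delta n"
    then obtain p e where p: "p \<in> P_set n" and e: "e \<in> E_Delta n" and f: "f = p \<circ> e"
      unfolding set_mult_def by (auto simp: centralizer_group_def)
    show "f \<in> centralizer (rot n)" unfolding f
      using cent_comp[OF subsetD[OF P_sub p] subsetD[OF E_sub e]] .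
  qed
  show "centralizer (rot n) \<subseteq> P_set n <#>\<^bsub>centralizer_group (rot n)\<^esub> E_Delta n"
  proof
    fix g assume gC: "g \<in> centralizer (rot n)"
    define e where "e = edef n g"
    have eE: "e \<in> E_Delta n" unfolding e_def by (rule e_E[OF n0 gC])
    have eC: "e \<in> centralizer (rot n)" unfolding e_def by (rule e_C[OF n0 gC])
    define p where "p = g \<circ> hinv e"
    have pC: "p \<in> centralizer (rot n)" unfolding p_def by (rule cent_comp[OF gC cent_hinv[OF eC]])
    have "pos n (p y) = pos n y" if y: "y \<in> {0..<1}" for y
    proof -
      define x where "x = hinv e y"
      have x: "x \<in> {0..<1}" unfolding x_def by (rule hinv_map[OF eC y])
      have ex: "e x = y" unfolding x_def by (rule hinv_right[OF eC])
      have "pos n (p y) = pos n (g x)" unfolding p_def x_def by simp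
      also have "\<dots> = pos n (e x)" unfolding e_def using e_props(3)[OF n0 gC x] by simp
      finally show ?thesis using ex by simp
    qed
    then have pP: "p \<in> P_set n" using P_char[OF n0] pC by simp
    have "p \<circ> e = g"
    proof
      fix x show "(p \<circ> e) x = g x" unfolding p_def using hinv_left[OF eC] by simp
    qed
    then show "g \<in> P_set n <#>\<^bsub>centralizer_group (rot n)\<^esub> E_Delta n"
      unfolding set_mult_def using pP eE by (force simp: centralizer_group_def)
  qed
qed

theorem proposition5p5:
  fixes n :: nat
  assumes "n \<ge> 2"
  shows "P_set n \<lhd> centralizer_group (rot n)
     \<and> P_set n \<inter> E_Delta n = {id}
     \<and> centralizer (rot n) = P_set n <#>\<^bsub>centralizer_group (rot n)\<^esub> E_Delta n"
proof -
  have n0: "n > 0" using assms by simp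
  show ?thesis using P_normal[OF n0] PE_int[OF n0] C_prod[OF n0] by blast
qed


end
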